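(* Let $S\in\{0,1\}^\infty$, let $f:\{0,1\}^\infty\to\{0,1\}^\infty$ be ILFS computable, and let $S'=f(S)$. If $S'$ is finite-state deep, then $S$ is finite-state deep.
   Context: A finite-state transducer (FST) is a 4-tuple $T=(Q,\delta,\nu,q_0)$ with $Q$ a nonempty finite set of states, $\delta:Q\times\{0,1\}\to Q$, $\nu:Q\times\{0,1\}\to\{0,1\}^*$, $q_0\in Q$, every state reachable from $q_0$; $\widehat\delta(\lambda)=q_0$, $\widehat\delta(xa)=\delta(\widehat\delta(x),a)$, $T(\lambda)=\lambda$, $T(xa)=T(x)\nu(\widehat\delta(x),a)$. $T$ is information lossless (IL) if $x\mapsto(T(x),\widehat\delta(x))$ is one-to-one; an ILFST is an IL FST. A function $f:\{0,1\}^\infty\to\{0,1\}^\infty$ is ILFS computable if there is an ILFST $T$ such that for every sequence $S$, $\lim_{n\to\infty}|T(S\upharpoonright n)|=\infty$ and $T(S\upharpoonright n)$ is a prefix of $f(S)$ for all $n$, where $S\upharpoonright n$ is the first $n$ bits of $S$. Fix a standard binary representation $\sigma_T$ of each FST, $|T|=|\sigma_T|$, $\mathrm{FST}^{\leq k}=\{T:|T|\le k\}$, and $\mathrm{FS}^k(x)=\min\{|p|:\exists T\in\mathrm{FST}^{\le k},\ T(p)=x\}$. $S$ is finite-state deep if $(\exists\alpha>0)(\forall k\in\mathbb{N})(\exists k'\in\mathbb{N})(\exists^\infty n\in\mathbb{N})\ \mathrm{FS}^k(S\upharpoonright n)-\mathrm{FS}^{k'}(S\upharpoonright n)\ge\alpha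 n$. *)

theory Defs
  imports Complex_Main "HOL-Library.Extended_Real"
begin

text \<open>Binary strings are bool lists (True = 1, False = 0); infinite binary
sequences are functions nat \<Rightarrow> bool.\<close>

definition seq_prefix :: "(nat \<Rightarrow> bool) \<Rightarrow> nat \<Rightarrow> bool list" where
  "seq_prefix S n = map S [0..<n]"

text \<open>A finite-state transducer: states are 0 .. nstates-1; the i-th entry of the
transition table is (delta(i,0), delta(i,1), nu(i,0), nu(i,1)); start is q0.\<close>

datatype fst = FST (nstates: nat) (trans: "(nat \<times> nat \<times> bool list \<times> bool list) list") (start: nat)

definition delta :: "fst \<Rightarrow> nat \<Rightarrow> bool \<Rightarrow> nat" where
  "delta T q b = (case trans T ! q of (d0, d1, _, _) \<Rightarrow> if b then d1 else d0)"

definition nu :: "fst \<Rightarrow> nat \<Rightarrow> bool \<Rightarrow> bool list" where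
  "nu T q b = (case trans T ! q of (_, _, v0, v1) \<Rightarrow> if b then v1 else v0)"

definition delta_hat :: "fst \<Rightarrow> bool list \<Rightarrow> nat" where
  "delta_hat T x = foldl (delta T) (start T) x"

text \<open>Output T(x), satisfying T(\<lambda>) = \<lambda> and T(xa) = T(x) nu(delta_hat(x), a).\<close>
definition fst_out :: "fst \<Rightarrow> bool list \<Rightarrow> bool list" where
  "fst_out T x = concat (map (\<lambda>i. nu T (delta_hat T (take i x)) (x ! i)) [0..<length x])"

definition wf_fst :: "fst \<Rightarrow> bool" where
  "wf_fst T \<longleftrightarrow> 0 < nstates T \<and> length (trans T) = nstates T \<and> start T < nstates T
     \<and> (\<forall>q<nstates T. \<forall>b. delta T q b < nstates T)
     \<and> (\<forall>q<nstates T. \<exists>x. delta_hat T x = q)"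

definition info_lossless :: "fst \<Rightarrow> bool" where
  "info_lossless T \<longleftrightarrow> inj (\<lambda>x. (fst_out T x, delta_hat T x))"

definition ILFS_computable :: "((nat \<Rightarrow> bool) \<Rightarrow> (nat \<Rightarrow> bool)) \<Rightarrow> bool" where
  "ILFS_computable f \<longleftrightarrow> (\<exists>T. wf_fst T \<and> info_lossless T \<and>
     (\<forall>S. filterlim (\<lambda>n. length (fst_out T (seq_prefix S n))) at_top sequentially
        \<and> (\<forall>n. fst_out T (seq_prefix S n) = seq_prefix (f S) (length (fst_out T (seq_prefix S n))))))"

text \<open>Standard (prefix-free, injective) binary representation sigma_T of an FST.\<close>
definition enc_nat :: "nat \<Rightarrow> bool list" where
  "enc_nat n = replicate n True @ [False]"

definition enc_bits :: "bool list \<Rightarrow> bool list" where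
  "enc_bits w = concat (map (\<lambda>b. [True, b]) w) @ [False]"

definition enc_entry :: "nat \<times> nat \<times> bool list \<times> bool list \<Rightarrow> bool list" where
  "enc_entry e = (case e of (a, b, u, v) \<Rightarrow> enc_nat a @ enc_nat b @ enc_bits u @ enc_bits v)"

definition sigma :: "fst \<Rightarrow> bool list" where
  "sigma T = enc_nat (nstates T) @ enc_nat (start T) @ concat (map enc_entry (trans T))"

definition fst_size :: "fst \<Rightarrow> nat" where
  "fst_size T = length (sigma T)"

definition FS :: "nat \<Rightarrow> bool list \<Rightarrow> enat" where
  "FS k x = (INF p\<in>{p. \<exists>T. wf_fst T \<and> fst_size T \<le> k \<and> fst_out T p = x}. enat (length p))"

definition fs_deep :: "(nat \<Rightarrow> bool) \<Rightarrow> bool" where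
  "fs_deep S \<longleftrightarrow> (\<exists>\<alpha>::real>0. \<forall>k. \<exists>k'. \<exists>\<^sub>\<infinity>n.
     ereal_of_enat (FS k' (seq_prefix S n)) + ereal (\<alpha> * real n) \<le> ereal_of_enat (FS k (seq_prefix S n)))"

end

theory Submission
  imports Defs "HOL-Library.Sublist" "HOL-Library.Infinite_Set"
begin

fun outf :: "('s \<Rightarrow> bool \<Rightarrow> 's) \<Rightarrow> ('s \<Rightarrow> bool \<Rightarrow> bool list) \<Rightarrow> 's \<Rightarrow> bool list \<Rightarrow> bool list" where
  "outf dl nv s [] = []"
| "outf dl nv s (b # xs) = nv s b @ outf dl nv (dl s b) xs"

lemma outf_append: "outf dl nv s (xs @ ys) = outf dl nv s xs @ outf dl nv (foldl dl s xs) ys"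
  by (induction xs arbitrary: s) auto

lemma outf_prefix: "prefix (outf dl nv s xs) (outf dl nv s (xs @ ys))"
  by (simp add: outf_append)

lemma delta_hat_snoc: "delta_hat T (x @ [b]) = delta T (delta_hat T x) b"
  by (simp add: delta_hat_def)

lemma concat_outf_aux:
  "concat (map (\<lambda>i. nv (foldl dl s (take i x)) (x ! i)) [0..<length x]) = outf dl nv s x"
proof (induction x arbitrary: s)
  case Nil then show ?case by simp
next
  case (Cons b x)
  have "[0..<length (b # x)] = 0 # map Suc [0..<length x]"
    by (simp only: length_Cons upt_conv_Cons[OF zero_less_Suc] map_Suc_upt)
  then show ?case using Cons[of "dl s b"] by (simp add: comp_def)
qed

lemma fst_out_outf: "fst_out T x = outf (delta T) (nu T) (start T) x"
  unfolding fst_out_def delta_hat_def using concat_outf_aux[of "nu T" "delta T" "start T" x] by simp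

lemma delta_hat_foldl: "delta_hat T x = foldl (delta T) (start T) x"
  by (simp add: delta_hat_def)

definition hsz :: "nat \<Rightarrow> nat \<Rightarrow> nat" where
  "hsz N L = 2*N + 2 + N*(2*N + 4*L + 4)"

lemma hsz_mono: "N \<le> N' \<Longrightarrow> L \<le> L' \<Longrightarrow> hsz N L \<le> hsz N' L'"
  unfolding hsz_def by (intro add_mono mult_mono) auto

lemma len_enc_nat[simp]: "length (enc_nat n) = n + 1"
  by (simp add: enc_nat_def)

lemma len_enc_bits[simp]: "length (enc_bits w) = 2 * length w + 1"
  by (induction w) (auto simp: enc_bits_def)

lemma len_enc_entry: "length (enc_entry (a, b, u, v)) = a + b + 2 * length u + 2 * length v + 4"
  by (simp add: enc_entry_def)

lemma fst_size_eq: "fst_size T = nstates T + 1 + (start T + 1) + sum_list (map (\<lambda>e. length (enc_entry e)) (trans T))"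
  by (simp add: fst_size_def sigma_def length_concat comp_def)

lemma nstates_le_size: "nstates T < fst_size T"
  by (simp add: fst_size_eq)

lemma entry_le_size:
  assumes "q < length (trans T)"
  shows "length (enc_entry (trans T ! q)) \<le> fst_size T"
proof -
  have "length (enc_entry (trans T ! q)) \<le> sum_list (map (\<lambda>e. length (enc_entry e)) (trans T))"
    using assms by (intro member_le_sum_list) auto
  then show ?thesis by (simp add: fst_size_eq)
qed

lemma nu_le_size:
  assumes "wf_fst T" "q < nstates T"
  shows "length (nu T q b) \<le> fst_size T"
proof -
  obtain a1 b1 u v where e: "trans T ! q = (a1, b1, u, v)" by (cases "trans T ! q") auto
  have "length (enc_entry (trans T ! q)) \<le> fst_size T"
    using assms by (intro entry_le_size) (auto simp: wf_fst_def)
  then show ?thesis using e by (auto simp: nu_def len_enc_entry)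
qed

lemma delta_lt:
  assumes "wf_fst T" "q < nstates T"
  shows "foldl (delta T) q x < nstates T"
  using assms by (induction x arbitrary: q) (auto simp: wf_fst_def)

lemma start_lt: "wf_fst T \<Longrightarrow> start T < nstates T"
  by (simp add: wf_fst_def)

section \<open>Pruning an abstract machine to a concrete FST\<close>

lemma prune:
  fixes s0 :: 's
  assumes finF: "finite F" and s0F: "s0 \<in> F" and clF: "\<forall>s\<in>F. \<forall>b. dl s b \<in> F"
    and nvL: "\<forall>s\<in>F. \<forall>b. length (nv s b) \<le> L"
  shows "\<exists>T. wf_fst T \<and> fst_size T \<le> hsz (card F) L \<and> (\<forall>x. fst_out T x = outf dl nv s0 x)"
proof -
  define R where "R = range (foldl dl s0)"
  have RF: "R \<subseteq> F"
  proof
    fix s assume "s \<in> R"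
    then obtain y where "s = foldl dl s0 y" by (auto simp: R_def)
    moreover have "\<And>t. t \<in> F \<Longrightarrow> foldl dl t y \<in> F"
      by (induction y) (use clF in auto)
    ultimately show "s \<in> F" using s0F by simp
  qed
  have finR: "finite R" using RF finF finite_subset by auto
  have s0R: "s0 \<in> R" unfolding R_def by (metis foldl_Nil rangeI)
  have clR: "\<And>s b. s \<in> R \<Longrightarrow> dl s b \<in> R"
  proof -
    fix s b assume "s \<in> R"
    then obtain y where "s = foldl dl s0 y" by (auto simp: R_def)
    then have "dl s b = foldl dl s0 (y @ [b])" by simp
    then show "dl s b \<in> R" unfolding R_def by (metis rangeI)
  qed
  define n where "n = card R"
  obtain e where e: "bij_betw e {0..<n} R"
    using ex_bij_betw_nat_finite[OF finR] unfolding n_def by blast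
  define idx where "idx = the_inv_into {0..<n} e"
  have idx1: "\<And>s. s \<in> R \<Longrightarrow> idx s < n \<and> e (idx s) = s"
    unfolding idx_def using e
    by (metis atLeastLessThan_iff bij_betw_def f_the_inv_into_f_bij_betw the_inv_into_into subset_refl)
  have idx2: "\<And>i. i < n \<Longrightarrow> idx (e i) = i \<and> e i \<in> R"
    unfolding idx_def using e
    by (metis atLeastLessThan_iff bij_betw_def bij_betwE the_inv_into_f_f zero_le)
  define tr where "tr = map (\<lambda>i. (idx (dl (e i) False), idx (dl (e i) True), nv (e i) False, nv (e i) True)) [0..<n]"
  define T where "T = FST n tr (idx s0)"
  have dT: "\<And>i b. i < n \<Longrightarrow> delta T i b = idx (dl (e i) b)"
    by (auto simp: T_def delta_def tr_def)
  have nT: "\<And>i b. i < n \<Longrightarrow> nu T i b = nv (e i) b"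
    by (auto simp: T_def nu_def tr_def)
  have run: "\<And>s. s \<in> R \<Longrightarrow> foldl (delta T) (idx s) x = idx (foldl dl s x)" for x
  proof (induction x)
    case Nil then show ?case by simp
  next
    case (Cons b x)
    have "delta T (idx s) b = idx (dl s b)" using dT idx1 Cons.prems by simp
    then show ?case using Cons.IH[OF clR[OF Cons.prems]] by simp
  qed
  have out: "\<And>s. s \<in> R \<Longrightarrow> outf (delta T) (nu T) (idx s) x = outf dl nv s x" for x
  proof (induction x)
    case Nil then show ?case by simp
  next
    case (Cons b x)
    have "delta T (idx s) b = idx (dl s b)" using dT idx1 Cons.prems by simp
    moreover have "nu T (idx s) b = nv s b" using nT idx1 Cons.prems by simp
    ultimately show ?case using Cons.IH[OF clR[OF Cons.prems]] by simp
  qed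
  have n0: "0 < n" unfolding n_def using finR s0R card_gt_0_iff by blast
  have wf: "wf_fst T"
    unfolding wf_fst_def
  proof (intro conjI allI impI)
    show "0 < nstates T" using n0 by (simp add: T_def)
    show "length (trans T) = nstates T" by (simp add: T_def tr_def)
    show "start T < nstates T" using idx1[OF s0R] by (simp add: T_def)
    fix q b assume "q < nstates T"
    then show "delta T q b < nstates T" using dT idx1 idx2 clR by (simp add: T_def)
  next
    fix q assume "q < nstates T"
    then have q: "q < n" by (simp add: T_def)
    then obtain y where "e q = foldl dl s0 y" using idx2 by (auto simp: R_def)
    then have "delta_hat T y = q"
      using run[OF s0R, of y] idx2[OF q] by (simp add: delta_hat_def T_def)
    then show "\<exists>x. delta_hat T x = q" by blast
  qed
  have size: "fst_size T \<le> hsz (card F) L"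
  proof -
    have ent: "length (enc_entry (tr ! i)) \<le> 2*n + 4*L + 4" if "i < n" for i
    proof -
      have "e i \<in> F" using idx2[OF that] RF by auto
      then have "length (nv (e i) False) \<le> L" "length (nv (e i) True) \<le> L" using nvL by auto
      moreover have "idx (dl (e i) False) < n" "idx (dl (e i) True) < n"
        using idx1 idx2[OF that] clR by auto
      ultimately show ?thesis using that by (simp add: tr_def len_enc_entry)
    qed
    have "sum_list (map (\<lambda>e. length (enc_entry e)) tr) = (\<Sum>i<n. length (enc_entry (tr ! i)))"
      by (simp add: sum_list_sum_nth tr_def atLeast0LessThan)
    also have "\<dots> \<le> n * (2*n + 4*L + 4)"
      using sum_bounded_above[of "{..<n}" "\<lambda>i. length (enc_entry (tr ! i))" "2*n + 4*L + 4"] ent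
      by simp
    finally have "sum_list (map (\<lambda>e. length (enc_entry e)) tr) \<le> n * (2*n + 4*L + 4)" .
    moreover have "idx s0 < n" using idx1 s0R by auto
    ultimately have "fst_size T \<le> hsz n L"
      by (simp add: fst_size_eq T_def hsz_def)
    also have "\<dots> \<le> hsz (card F) L"
      using card_mono[OF finF RF] by (intro hsz_mono) (auto simp: n_def)
    finally show ?thesis .
  qed
  have "\<forall>x. fst_out T x = outf dl nv s0 x"
    using out[OF s0R] by (simp add: fst_out_outf T_def)
  then show ?thesis using wf size by blast
qed

lemma FS_le:
  assumes "wf_fst C" "fst_size C \<le> k" "fst_out C p = x"
  shows "FS k x \<le> enat (length p)"
  unfolding FS_def using assms by (intro INF_lower) blast

lemma FS_mono:
  assumes "k \<le> k2"
  shows "FS k2 x \<le> FS k x"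
  unfolding FS_def using assms by (intro INF_superset_mono) auto

lemma FS_attain:
  assumes "FS k x \<noteq> \<infinity>"
  shows "\<exists>C p. wf_fst C \<and> fst_size C \<le> k \<and> fst_out C p = x \<and> FS k x = enat (length p)"
proof -
  define P where "P = {p. \<exists>T. wf_fst T \<and> fst_size T \<le> k \<and> fst_out T p = x}"
  have FSd: "FS k x = Inf ((\<lambda>p. enat (length p)) ` P)" by (simp add: FS_def P_def)
  have "P \<noteq> {}" using assms FSd by (auto simp: top_enat_def[symmetric])
  then obtain p0 where "p0 \<in> P" by blast
  then have "Inf ((\<lambda>p. enat (length p)) ` P) \<in> (\<lambda>p. enat (length p)) ` P"
    by (intro wellorder_InfI[of "enat (length p0)"]) auto
  then obtain p where "p \<in> P" "FS k x = enat (length p)" using FSd by auto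
  then show ?thesis by (auto simp: P_def)
qed

lemma outf_len_le:
  assumes "\<forall>s\<in>F. \<forall>b. dl s b \<in> F" "\<forall>s\<in>F. \<forall>b. length (nv s b) \<le> L" "s \<in> F"
  shows "length (outf dl nv s w) \<le> length w * L"
  using assms(3)
proof (induction w arbitrary: s)
  case Nil then show ?case by simp
next
  case (Cons b w)
  have "length (nv s b) \<le> L" using assms(2) Cons.prems by auto
  moreover have "length (outf dl nv (dl s b) w) \<le> length w * L"
    using Cons.IH assms(1) Cons.prems by auto
  ultimately show ?case by simp
qed

lemma fst_outf_len_le:
  assumes "wf_fst T" "q < nstates T"
  shows "length (outf (delta T) (nu T) q w) \<le> length w * fst_size T"
  using outf_len_le[of "{..<nstates T}" "delta T" "nu T" "fst_size T" q w] assms nu_le_size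
  by (auto simp: wf_fst_def)

lemma comp_fst:
  assumes A: "wf_fst A" and T: "wf_fst T"
  shows "\<exists>C. wf_fst C \<and> fst_size C \<le> hsz (nstates A * nstates T) (fst_size A * fst_size T)
           \<and> (\<forall>p. fst_out C p = fst_out T (fst_out A p))"
proof -
  define dl where "dl = (\<lambda>(a, t) b. (delta A a b, foldl (delta T) t (nu A a b)))"
  define nv where "nv = (\<lambda>(a, t) b. outf (delta T) (nu T) t (nu A a b))"
  define F where "F = {..<nstates A} \<times> {..<nstates T}"
  have finF: "finite F" by (simp add: F_def)
  have cardF: "card F = nstates A * nstates T" by (simp add: F_def card_cartesian_product)
  have s0F: "(start A, start T) \<in> F" using A T by (simp add: F_def wf_fst_def)
  have clF: "\<forall>s\<in>F. \<forall>b. dl s b \<in> F"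
    using A T delta_lt by (auto simp: F_def dl_def wf_fst_def)
  have nvL: "\<forall>s\<in>F. \<forall>b. length (nv s b) \<le> fst_size A * fst_size T"
  proof (intro ballI allI)
    fix s b assume "s \<in> F"
    then obtain a t where s: "s = (a, t)" "a < nstates A" "t < nstates T" by (auto simp: F_def)
    have "length (nv s b) \<le> length (nu A a b) * fst_size T"
      using s fst_outf_len_le[OF T] by (simp add: nv_def)
    also have "\<dots> \<le> fst_size A * fst_size T"
      using nu_le_size[OF A s(2)] by simp
    finally show "length (nv s b) \<le> fst_size A * fst_size T" .
  qed
  have eq: "outf dl nv (a, t) x = outf (delta T) (nu T) t (outf (delta A) (nu A) a x)" for a t x
    by (induction x arbitrary: a t) (auto simp: dl_def nv_def outf_append)
  obtain C where C: "wf_fst C" "fst_size C \<le> hsz (card F) (fst_size A * fst_size T)"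
    "\<forall>x. fst_out C x = outf dl nv (start A, start T) x"
    using prune[OF finF s0F clF nvL] by blast
  show ?thesis using C eq cardF by (auto simp: fst_out_outf)
qed

definition tdl :: "('s \<Rightarrow> bool \<Rightarrow> 's) \<Rightarrow> 's \<Rightarrow> bool \<Rightarrow> 's \<times> bool \<Rightarrow> bool \<Rightarrow> 's \<times> bool" where
  "tdl dl qx bx = (\<lambda>(s, fl) c. (dl s c, s = qx \<and> c = bx))"

definition tnv :: "('s \<Rightarrow> bool \<Rightarrow> bool list) \<Rightarrow> 's \<Rightarrow> bool \<Rightarrow> bool list \<Rightarrow> bool list \<Rightarrow> 's \<times> bool \<Rightarrow> bool \<Rightarrow> bool list" where
  "tnv nv qx bx u v = (\<lambda>(s, fl) c. (if fl then v else []) @ (if s = qx \<and> c = bx then u else nv s c))"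

lemma trunc_machine:
  assumes uv: "nv qx bx = u @ v"
  shows "fst (foldl (tdl dl qx bx) (s, fl) y) = foldl dl s y \<and>
    outf (tdl dl qx bx) (tnv nv qx bx u v) (s, fl) y @ (if snd (foldl (tdl dl qx bx) (s, fl) y) then v else [])
      = (if fl then v else []) @ outf dl nv s y"
proof (induction y arbitrary: s fl)
  case Nil then show ?case by simp
next
  case (Cons c y)
  define fl' where "fl' = (s = qx \<and> c = bx)"
  have st: "tdl dl qx bx (s, fl) c = (dl s c, fl')" by (simp add: tdl_def fl'_def)
  have IH: "fst (foldl (tdl dl qx bx) (dl s c, fl') y) = foldl dl (dl s c) y \<and>
    outf (tdl dl qx bx) (tnv nv qx bx u v) (dl s c, fl') y @ (if snd (foldl (tdl dl qx bx) (dl s c, fl') y) then v else [])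
      = (if fl' then v else []) @ outf dl nv (dl s c) y" by (rule Cons.IH)
  have key: "(if fl' then u else nv s c) @ (if fl' then v else []) = nv s c"
    using uv by (auto simp: fl'_def)
  have nv': "tnv nv qx bx u v (s, fl) c = (if fl then v else []) @ (if fl' then u else nv s c)"
    by (simp add: tnv_def fl'_def)
  show ?case using IH key by (simp add: st nv')
qed

lemma hsz_ge: "k \<le> hsz (2*k) (2*k)"
  by (simp add: hsz_def)

lemma trunc_fst:
  assumes C: "wf_fst C" "fst_size C \<le> k" and out: "fst_out C p = x @ w"
  shows "\<exists>C' p'. wf_fst C' \<and> fst_size C' \<le> hsz (2*k) (2*k) \<and> length p' \<le> length p \<and> fst_out C' p' = x"
proof (cases "w = []")
  case True
  then show ?thesis using C out hsz_ge[of k] by (intro exI[of _ C] exI[of _ p]) auto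
next
  case False
  let ?O = "outf (delta C) (nu C) (start C)"
  have Op: "?O p = x @ w" using out by (simp add: fst_out_outf)
  have ex: "\<exists>i. \<not> prefix (?O (take i p)) x"
    using Op False by (intro exI[of _ "length p"]) (auto dest: prefix_length_le)
  define i0 where "i0 = (LEAST i. \<not> prefix (?O (take i p)) x)"
  have i0: "\<not> prefix (?O (take i0 p)) x" unfolding i0_def using LeastI_ex[OF ex] .
  have i0pos: "i0 \<noteq> 0" using i0 by (cases "i0 = 0") auto
  have i0le: "i0 \<le> length p"
  proof (rule ccontr)
    assume "\<not> i0 \<le> length p"
    then have "take (length p) p = take i0 p" by simp
    moreover have "\<not> prefix (?O (take (length p) p)) x \<Longrightarrow> i0 \<le> length p"
      unfolding i0_def by (rule Least_le)
    ultimately show False using i0 \<open>\<not> i0 \<le> length p\<close> by auto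
  qed
  define p0 where "p0 = take (i0 - 1) p"
  define b where "b = p ! (i0 - 1)"
  have tk: "take i0 p = p0 @ [b]"
  proof -
    have "take (Suc (i0-1)) p = take (i0-1) p @ [p!(i0-1)]"
      by (rule take_Suc_conv_app_nth) (use i0pos i0le in simp)
    then show ?thesis using i0pos by (simp add: p0_def b_def)
  qed
  have pre0: "prefix (?O p0) x"
  proof -
    have "i0 - 1 < i0" using i0pos by simp
    then have "prefix (?O (take (i0 - 1) p)) x"
      using not_less_Least[of "i0 - 1" "\<lambda>i. \<not> prefix (?O (take i p)) x"] unfolding i0_def by blast
    then show ?thesis by (simp add: p0_def)
  qed
  define q where "q = foldl (delta C) (start C) p0"
  have O1: "?O (p0 @ [b]) = ?O p0 @ nu C q b" by (simp add: outf_append q_def)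
  have "prefix (?O (take i0 p)) (?O p)"
    using outf_prefix[of "delta C" "nu C" "start C" "take i0 p" "drop i0 p"] by simp
  then have pre1: "prefix (?O p0 @ nu C q b) (x @ w)" using tk O1 Op by simp
  have npre: "\<not> prefix (?O p0 @ nu C q b) x" using i0 tk O1 by simp
  have "prefix x (?O p0 @ nu C q b)"
    using pre1 npre prefix_same_cases[of x "x @ w" "?O p0 @ nu C q b"] by auto
  then obtain u where xu: "x = ?O p0 @ u" and pu: "prefix u (nu C q b)"
    using pre0 by (metis prefix_def same_prefix_prefix)
  then obtain v where uv: "nu C q b = u @ v" by (auto simp: prefix_def)
  define F where "F = {..<nstates C} \<times> (UNIV :: bool set)"
  have finF: "finite F" by (simp add: F_def)
  have cardF: "card F = 2 * nstates C" by (simp add: F_def card_cartesian_product)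
  have s0F: "(start C, False) \<in> F" using C by (simp add: F_def wf_fst_def)
  have clF: "\<forall>s\<in>F. \<forall>c. tdl (delta C) q b s c \<in> F"
    using C by (auto simp: F_def tdl_def wf_fst_def)
  have qlt: "q < nstates C" using C delta_lt start_lt q_def by blast
  have nvL: "\<forall>s\<in>F. \<forall>c. length (tnv (nu C) q b u v s c) \<le> 2 * fst_size C"
  proof (intro ballI allI)
    fix s c assume "s \<in> F"
    then obtain t fl where s: "s = (t, fl)" "t < nstates C" by (auto simp: F_def)
    have "length v \<le> fst_size C" "length u \<le> fst_size C"
      using nu_le_size[OF C(1) qlt, of b] uv by auto
    moreover have "length (nu C t c) \<le> fst_size C" using nu_le_size[OF C(1) s(2)] .
    ultimately show "length (tnv (nu C) q b u v s c) \<le> 2 * fst_size C"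
      by (auto simp: tnv_def s)
  qed
  obtain C' where C': "wf_fst C'" "fst_size C' \<le> hsz (card F) (2 * fst_size C)"
    "\<forall>y. fst_out C' y = outf (tdl (delta C) q b) (tnv (nu C) q b u v) (start C, False) y"
    using prune[OF finF s0F clF nvL] by blast
  have tm: "outf (tdl (delta C) q b) (tnv (nu C) q b u v) (start C, False) (p0 @ [b])
      @ (if snd (foldl (tdl (delta C) q b) (start C, False) (p0 @ [b])) then v else [])
      = ?O (p0 @ [b])"
    using conjunct2[OF trunc_machine[where nv="nu C" and qx=q and bx=b and u=u and v=v and dl="delta C" and s="start C" and fl=False and y="p0 @ [b]", OF uv]]
    by (simp only: if_False append_Nil)
  have "snd (foldl (tdl (delta C) q b) (start C, False) (p0 @ [b]))"
  proof -
    have "fst (foldl (tdl (delta C) q b) (start C, False) p0) = q"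
      using conjunct1[OF trunc_machine[where nv="nu C" and qx=q and bx=b and u=u and v=v and dl="delta C" and s="start C" and fl=False and y="p0", OF uv]] by (simp only: q_def)
    then show ?thesis by (cases "foldl (tdl (delta C) q b) (start C, False) p0") (simp add: tdl_def)
  qed
  then have "fst_out C' (p0 @ [b]) = x" using tm O1 uv xu C'(3) by simp
  moreover have "length (p0 @ [b]) \<le> length p"
  proof -
    have "length (p0 @ [b]) = length (take i0 p)" using tk by simp
    then show ?thesis by simp
  qed
  moreover have "fst_size C' \<le> hsz (2*k) (2*k)"
  proof -
    have "card F \<le> 2*k" "2 * fst_size C \<le> 2*k" using cardF nstates_le_size[of C] C(2) by auto
    then have "hsz (card F) (2 * fst_size C) \<le> hsz (2*k) (2*k)" by (rule hsz_mono)
    then show ?thesis using C'(2) by linarith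
  qed
  ultimately show ?thesis using C'(1) by blast
qed

section \<open>Lower bound via composition and truncation\<close>

definition gL :: "fst \<Rightarrow> nat \<Rightarrow> nat" where
  "gL T k = hsz (2 * hsz (k * nstates T) (k * fst_size T)) (2 * hsz (k * nstates T) (k * fst_size T))"

lemma lower_bound:
  assumes T: "wf_fst T" and out: "fst_out T x = y @ w"
  shows "FS (gL T k) y \<le> FS k x"
proof (cases "FS k x = \<infinity>")
  case True then show ?thesis by simp
next
  case False
  obtain A p where A: "wf_fst A" "fst_size A \<le> k" "fst_out A p = x" "FS k x = enat (length p)"
    using FS_attain[OF False] by blast
  obtain C where C: "wf_fst C" "fst_size C \<le> hsz (nstates A * nstates T) (fst_size A * fst_size T)"
    "\<forall>p. fst_out C p = fst_out T (fst_out A p)"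
    using comp_fst[OF A(1) T] by blast
  define hk where "hk = hsz (k * nstates T) (k * fst_size T)"
  have "hsz (nstates A * nstates T) (fst_size A * fst_size T) \<le> hk"
    unfolding hk_def using nstates_le_size[of A] A(2) by (intro hsz_mono mult_right_mono) auto
  then have Ck: "fst_size C \<le> hk" using C(2) by linarith
  have "fst_out C p = y @ w" using C(3) A(3) out by simp
  then obtain C' p' where C': "wf_fst C'" "fst_size C' \<le> hsz (2*hk) (2*hk)" "length p' \<le> length p" "fst_out C' p' = y"
    using trunc_fst[OF C(1) Ck] by blast
  have "FS (gL T k) y \<le> enat (length p')"
    using C' by (intro FS_le) (auto simp: gL_def hk_def)
  also have "\<dots> \<le> FS k x" using C'(3) A(4) by simp
  finally show ?thesis .
qed

section \<open>Information losslessness consequences\<close>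

lemma fst_out_append_outf:
  "fst_out T (z @ u) = fst_out T z @ outf (delta T) (nu T) (delta_hat T z) u"
  by (simp add: fst_out_outf outf_append delta_hat_def)

lemma delta_hat_append: "delta_hat T (z @ u) = foldl (delta T) (delta_hat T z) u"
  by (simp add: delta_hat_def)

lemma IL_state:
  assumes IL: "info_lossless T"
    and o: "outf (delta T) (nu T) (delta_hat T z) u1 = outf (delta T) (nu T) (delta_hat T z) u2"
    and d: "foldl (delta T) (delta_hat T z) u1 = foldl (delta T) (delta_hat T z) u2"
  shows "u1 = u2"
proof -
  have "(fst_out T (z @ u1), delta_hat T (z @ u1)) = (fst_out T (z @ u2), delta_hat T (z @ u2))"
    using o d by (simp add: fst_out_append_outf delta_hat_append)
  then have "z @ u1 = z @ u2" using IL unfolding info_lossless_def inj_def by blast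
  then show ?thesis by simp
qed

lemma zero_out_short:
  assumes IL: "info_lossless T" and T: "wf_fst T"
    and o: "outf (delta T) (nu T) (delta_hat T z) u = []"
  shows "length u < nstates T"
proof (rule ccontr)
  assume "\<not> length u < nstates T"
  define q where "q = delta_hat T z"
  define g where "g = (\<lambda>i. foldl (delta T) q (take i u))"
  have ql: "q < nstates T" unfolding q_def delta_hat_def using T delta_lt start_lt by blast
  have img: "g ` {0..nstates T} \<subseteq> {..<nstates T}"
    using ql T delta_lt unfolding g_def by auto
  have "\<not> inj_on g {0..nstates T}"
  proof
    assume "inj_on g {0..nstates T}"
    then have "card {0..nstates T} \<le> card {..<nstates T}"
      using card_inj_on_le[OF _ img] by simp
    then show False by simp
  qed
  then obtain i j where ij: "i \<in> {0..nstates T}" "j \<in> {0..nstates T}" "i \<noteq> j" "g i = g j"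
    unfolding inj_on_def by blast
  have e: "outf (delta T) (nu T) q (take i u') = []" if "outf (delta T) (nu T) q u' = []" for i u'
    using outf_append[of "delta T" "nu T" q "take i u'" "drop i u'"] that by simp
  have "take i u = take j u"
    using IL_state[OF IL, of z "take i u" "take j u"] e[OF o[folded q_def]] ij(4)
    by (simp add: g_def q_def)
  moreover have "i \<le> length u" "j \<le> length u" using ij \<open>\<not> length u < nstates T\<close> by auto
  ultimately have "i = j" by (metis length_take min.absorb2)
  then show False using ij(3) by simp
qed

lemma growth:
  assumes IL: "info_lossless T" and T: "wf_fst T"
  shows "length u < nstates T * (length (outf (delta T) (nu T) (delta_hat T z) u) + 1)"
proof (induction "length u" arbitrary: u z rule: less_induct)
  case less
  define q where "q = delta_hat T z"
  let ?O = "outf (delta T) (nu T)"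
  show ?case
  proof (cases "?O q u = []")
    case True
    then show ?thesis using zero_out_short[OF IL T, of z u] by (simp add: q_def)
  next
    case False
    have ex: "\<exists>i. ?O q (take i u) \<noteq> []" using False by (intro exI[of _ "length u"]) simp
    define i0 where "i0 = (LEAST i. ?O q (take i u) \<noteq> [])"
    have i0: "?O q (take i0 u) \<noteq> []" unfolding i0_def using LeastI_ex[OF ex] .
    have i0pos: "i0 \<noteq> 0" using i0 by (cases "i0 = 0") auto
    have "?O q (take (i0 - 1) u) = []"
      using not_less_Least[of "i0 - 1" "\<lambda>i. ?O q (take i u) \<noteq> []"] i0pos unfolding i0_def by auto
    then have s1: "length (take (i0 - 1) u) < nstates T"
      using zero_out_short[OF IL T, of z "take (i0 - 1) u"] by (simp add: q_def)
    have i0le: "i0 \<le> length u"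
    proof (rule ccontr)
      assume "\<not> i0 \<le> length u"
      then have "?O q (take (length u) u) \<noteq> []" using i0 by simp
      then have "i0 \<le> length u" unfolding i0_def by (rule Least_le)
      then show False using \<open>\<not> i0 \<le> length u\<close> by simp
    qed
    then have i0n: "i0 \<le> nstates T" using s1 i0pos by simp
    define u2 where "u2 = drop i0 u"
    have split: "u = take i0 u @ u2" by (simp add: u2_def)
    have Osplit: "?O q u = ?O q (take i0 u) @ ?O (delta_hat T (z @ take i0 u)) u2"
      using outf_append[of "delta T" "nu T" q "take i0 u" u2] split
      by (simp add: q_def delta_hat_append)
    have "length u2 < length u" using i0pos i0le by (simp add: u2_def)
    then have IH: "length u2 < nstates T * (length (?O (delta_hat T (z @ take i0 u)) u2) + 1)"
      using less by blast
    have "length (?O q (take i0 u)) \<ge> 1" using i0 by (cases "?O q (take i0 u)") auto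
    then have "length (?O q u) \<ge> length (?O (delta_hat T (z @ take i0 u)) u2) + 1"
      using Osplit by simp
    then have "nstates T * (length (?O (delta_hat T (z @ take i0 u)) u2) + 1) + nstates T
       \<le> nstates T * (length (?O q u) + 1)"
      by (metis add_mult_distrib2 mult.right_neutral mult_le_mono2 add_le_mono1)
    moreover have "length u = i0 + length u2" using i0le by (simp add: u2_def)
    ultimately show ?thesis using IH i0n by (simp add: q_def)
  qed
qed

section \<open>The decoding machine\<close>

datatype emode = AF "bool list" | AO nat "bool list" | AQ nat nat "bool list" | PG nat nat "bool list" | LI

definition decs :: "fst \<Rightarrow> nat \<Rightarrow> nat \<Rightarrow> bool list \<Rightarrow> nat \<Rightarrow> bool list" where
  "decs T Md q z q' = (if \<exists>u. length u \<le> Md \<and> outf (delta T) (nu T) q u = z \<and> foldl (delta T) q u = q'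
     then (SOME u. length u \<le> Md \<and> outf (delta T) (nu T) q u = z \<and> foldl (delta T) q u = q') else [])"

definition Md :: "fst \<Rightarrow> nat \<Rightarrow> nat" where
  "Md T c = nstates T * (c + fst_size T + 1)"

fun Estep :: "fst \<Rightarrow> fst \<Rightarrow> nat \<Rightarrow> nat \<times> nat \<times> emode \<Rightarrow> bool \<Rightarrow> (nat \<times> nat \<times> emode) \<times> bool list" where
  "Estep B T c (s, q, AF buf) b = (if b then ((s, q, AO 0 buf), []) else ((s, q, LI), []))"
| "Estep B T c (s, q, AO k buf) b = (if b then ((s, q, AO (min (k+1) (fst_size T - 1)) buf), []) else ((s, q, AQ k 0 buf), []))"
| "Estep B T c (s, q, AQ off k buf) b = (if b then ((s, q, AQ off (min (k+1) (nstates T - 1)) buf), []) else ((s, q, PG (c + off) k buf), []))"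
| "Estep B T c (s, q, PG l q' buf) b =
     (if l \<le> length (buf @ nu B s b)
      then ((delta B s b, q', AF (drop l (buf @ nu B s b))), decs T (Md T c) q (take l (buf @ nu B s b)) q')
      else ((delta B s b, q, PG l q' (buf @ nu B s b)), []))"
| "Estep B T c (s, q, LI) b = ((s, q, LI), [b])"

definition Edl where "Edl B T c st b = fst (Estep B T c st b)"
definition Env where "Env B T c st b = snd (Estep B T c st b)"

lemma Edl_simps[simp]:
  "Edl B T c (s, q, AF buf) b = (if b then (s, q, AO 0 buf) else (s, q, LI))"
  "Edl B T c (s, q, AO k buf) b = (if b then (s, q, AO (min (k+1) (fst_size T - 1)) buf) else (s, q, AQ k 0 buf))"
  "Edl B T c (s, q, AQ off k buf) b = (if b then (s, q, AQ off (min (k+1) (nstates T - 1)) buf) else (s, q, PG (c + off) k buf))"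
  "Edl B T c (s, q, LI) b = (s, q, LI)"
  by (simp_all add: Edl_def)

lemma Env_simps[simp]:
  "Env B T c (s, q, AF buf) b = []"
  "Env B T c (s, q, AO k buf) b = []"
  "Env B T c (s, q, AQ off k buf) b = []"
  "Env B T c (s, q, LI) b = [b]"
  by (simp_all add: Env_def)

lemma E_LI: "outf (Edl B T c) (Env B T c) (s, q, LI) w = w"
  by (induction w) auto

lemma E_AO:
  assumes "k + i < fst_size T"
  shows "foldl (Edl B T c) (s, q, AO k buf) (replicate i True) = (s, q, AO (k + i) buf)
    \<and> outf (Edl B T c) (Env B T c) (s, q, AO k buf) (replicate i True) = []"
  using assms
proof (induction i arbitrary: k)
  case 0 then show ?case by simp
next
  case (Suc i)
  have "min (k+1) (fst_size T - 1) = k + 1" using Suc.prems by simp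
  then show ?case using Suc.IH[of "k+1"] Suc.prems by simp
qed

lemma E_AQ:
  assumes "k + i < nstates T"
  shows "foldl (Edl B T c) (s, q, AQ off k buf) (replicate i True) = (s, q, AQ off (k + i) buf)
    \<and> outf (Edl B T c) (Env B T c) (s, q, AQ off k buf) (replicate i True) = []"
  using assms
proof (induction i arbitrary: k)
  case 0 then show ?case by simp
next
  case (Suc i)
  have "min (k+1) (nstates T - 1) = k + 1" using Suc.prems by simp
  then show ?case using Suc.IH[of "k+1"] Suc.prems by simp
qed

definition adv :: "nat \<Rightarrow> nat \<Rightarrow> bool list" where
  "adv off q' = [True] @ replicate off True @ [False] @ replicate q' True @ [False]"

lemma length_adv: "length (adv off q') = off + q' + 3"
  by (simp add: adv_def)

lemma E_adv:
  assumes "off < fst_size T" "q' < nstates T"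
  shows "foldl (Edl B T c) (s, q, AF buf) (adv off q') = (s, q, PG (c + off) q' buf)
    \<and> outf (Edl B T c) (Env B T c) (s, q, AF buf) (adv off q') = []"
proof -
  have a: "foldl (Edl B T c) (s, q, AO 0 buf) (replicate off True) = (s, q, AO off buf)
    \<and> outf (Edl B T c) (Env B T c) (s, q, AO 0 buf) (replicate off True) = []"
    using E_AO[of 0 off T B c s q buf] assms by simp
  have b: "foldl (Edl B T c) (s, q, AQ off 0 buf) (replicate q' True) = (s, q, AQ off q' buf)
    \<and> outf (Edl B T c) (Env B T c) (s, q, AQ off 0 buf) (replicate q' True) = []"
    using E_AQ[of 0 q' T B c s q off buf] assms by simp
  show ?thesis using a b by (simp add: adv_def outf_append)
qed

lemma E_PG:
  assumes "\<sigma> \<noteq> []" "length buf < l"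
    and "l \<le> length (buf @ outf (delta B) (nu B) s \<sigma>)"
    and "\<forall>i<length \<sigma>. length (buf @ outf (delta B) (nu B) s (take i \<sigma>)) < l"
    and B: "wf_fst B" and s: "s < nstates B"
  shows "foldl (Edl B T c) (s, q, PG l q' buf) \<sigma> = (foldl (delta B) s \<sigma>, q', AF (drop l (buf @ outf (delta B) (nu B) s \<sigma>)))
    \<and> outf (Edl B T c) (Env B T c) (s, q, PG l q' buf) \<sigma> = decs T (Md T c) q (take l (buf @ outf (delta B) (nu B) s \<sigma>)) q'
    \<and> length (drop l (buf @ outf (delta B) (nu B) s \<sigma>)) < fst_size B"
  using assms
proof (induction \<sigma> arbitrary: s buf)
  case Nil then show ?case by simp
next
  case (Cons b \<sigma>)
  define buf1 where "buf1 = buf @ nu B s b"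
  have z: "buf @ outf (delta B) (nu B) s (b # \<sigma>) = buf1 @ outf (delta B) (nu B) (delta B s b) \<sigma>"
    by (simp add: buf1_def)
  show ?case
  proof (cases "l \<le> length buf1")
    case True
    have "\<sigma> = []"
    proof (rule ccontr)
      assume "\<sigma> \<noteq> []"
      then have "1 < length (b # \<sigma>)" by simp
      then have "length (buf @ outf (delta B) (nu B) s (take 1 (b # \<sigma>))) < l" using Cons.prems(4) by blast
      then show False using True by (simp add: buf1_def)
    qed
    have st: "Edl B T c (s, q, PG l q' buf) b = (delta B s b, q', AF (drop l buf1))"
      "Env B T c (s, q, PG l q' buf) b = decs T (Md T c) q (take l buf1) q'"
      using True by (simp_all add: Edl_def Env_def buf1_def)
    have "length (nu B s b) \<le> fst_size B" using nu_le_size[OF B Cons.prems(6)] .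
    then have "length (drop l buf1) < fst_size B" using Cons.prems(2) nstates_le_size[of B] by (simp add: buf1_def)
    then show ?thesis using st \<open>\<sigma> = []\<close> by (simp add: buf1_def)
  next
    case False
    have st: "Edl B T c (s, q, PG l q' buf) b = (delta B s b, q, PG l q' buf1)"
      "Env B T c (s, q, PG l q' buf) b = []"
      using False by (simp_all add: Edl_def Env_def buf1_def)
    have sne: "\<sigma> \<noteq> []" using False Cons.prems(3) by (auto simp: buf1_def)
    have min': "\<forall>i<length \<sigma>. length (buf1 @ outf (delta B) (nu B) (delta B s b) (take i \<sigma>)) < l"
    proof (intro allI impI)
      fix i assume "i < length \<sigma>"
      then have "Suc i < length (b # \<sigma>)" by simp
      then have "length (buf @ outf (delta B) (nu B) s (take (Suc i) (b # \<sigma>))) < l" using Cons.prems(4) by blast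
      then show "length (buf1 @ outf (delta B) (nu B) (delta B s b) (take i \<sigma>)) < l" by (simp add: buf1_def)
    qed
    have s': "delta B s b < nstates B" using B Cons.prems(6) by (simp add: wf_fst_def)
    have l1: "length buf1 < l" using False by simp
    have l2: "l \<le> length (buf1 @ outf (delta B) (nu B) (delta B s b) \<sigma>)" using Cons.prems(3) z by (simp only: length_append)
    note IH = Cons.IH[OF sne l1 l2 min' B s']
    show ?thesis unfolding foldl_Cons outf.simps(2) st append_Nil using IH by (simp only: buf1_def append_assoc)
  qed
qed

lemma pre_seq:
  assumes "prefix ys (seq_prefix S M)"
  shows "ys = seq_prefix S (length ys)"
proof -
  obtain zs where "seq_prefix S M = ys @ zs" using assms by (auto simp: prefix_def)
  then have "ys = take (length ys) (seq_prefix S M)" by simp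
  moreover have "length ys \<le> M" using assms prefix_length_le by (fastforce simp: seq_prefix_def)
  ultimately show ?thesis by (simp add: seq_prefix_def take_map)
qed

lemma take_seq_prefix: "L \<le> M \<Longrightarrow> take L (seq_prefix S M) = seq_prefix S L"
  by (simp add: seq_prefix_def take_map)

locale DS =
  fixes T B :: fst and S S' :: "nat \<Rightarrow> bool" and c m :: nat and p :: "bool list"
  assumes T: "wf_fst T" and IL: "info_lossless T" and B: "wf_fst B"
    and Tpre: "\<And>n. fst_out T (seq_prefix S n) = seq_prefix S' (length (fst_out T (seq_prefix S n)))"
    and Tunb: "\<And>M. \<exists>n. M \<le> length (fst_out T (seq_prefix S n))"
    and Bp: "fst_out B p = seq_prefix S' m"
    and cB: "fst_size B \<le> c"
begin

abbreviation "mm n \<equiv> length (fst_out T (seq_prefix S n))"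
abbreviation "xs n \<equiv> seq_prefix S n"
definition seg where "seg j j' = map S [j..<j']"
abbreviation "Bo \<pi> \<equiv> outf (delta B) (nu B) (start B) \<pi>"
abbreviation "Br \<pi> \<equiv> foldl (delta B) (start B) \<pi>"
abbreviation "To q u \<equiv> outf (delta T) (nu T) q u"
abbreviation "Eo \<equiv> outf (Edl B T c) (Env B T c)"
abbreviation "Er \<equiv> foldl (Edl B T c)"

definition Inv where
  "Inv j \<pi> buf \<longleftrightarrow> prefix \<pi> p \<and> Bo \<pi> = fst_out T (xs j) @ buf \<and> length buf < c \<and> mm j \<le> m"

definition st where "st j \<pi> buf = (Br \<pi>, delta_hat T (xs j), AF buf)"

lemma cpos: "1 \<le> c" using cB nstates_le_size[of B] by simp

lemma xs_split: "j \<le> j' \<Longrightarrow> xs j' = xs j @ seg j j'"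
proof -
  assume "j \<le> j'"
  then have "[0..<j'] = [0..<j] @ [j..<j']" using upt_add_eq_append[of 0 j "j'-j"] by simp
  then show ?thesis by (simp add: seq_prefix_def seg_def)
qed

lemma Tsplit: "j \<le> j' \<Longrightarrow> fst_out T (xs j') = fst_out T (xs j) @ To (delta_hat T (xs j)) (seg j j')"
  using xs_split fst_out_append_outf by metis

lemma seg_len[simp]: "length (seg j j') = j' - j"
  by (simp add: seg_def)

lemma dh_lt: "delta_hat T x < nstates T"
  using T delta_lt start_lt by (simp add: delta_hat_def)

lemma mm_mono: "j \<le> j' \<Longrightarrow> mm j \<le> mm j'"
  using Tsplit by (metis le_add1 length_append)

lemma mm_step: "mm (Suc j) \<le> mm j + fst_size T"
proof -
  have "seg j (Suc j) = [S j]" by (simp add: seg_def)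
  then have "mm (Suc j) = mm j + length (nu T (delta_hat T (xs j)) (S j))"
    using Tsplit[of j "Suc j"] by simp
  then show ?thesis using nu_le_size[OF T dh_lt] by simp
qed

lemma seg_bound: "j \<le> j' \<Longrightarrow> j' - j < nstates T * (mm j' - mm j + 1)"
  using growth[OF IL T, of "seg j j'" "xs j"] Tsplit[of j j'] by simp

lemma xs_bound: "j < nstates T * (mm j + 1)"
proof -
  have "delta_hat T [] = start T" by (simp add: delta_hat_def)
  then show ?thesis using growth[OF IL T, of "xs j" "[]"]
    by (simp add: fst_out_outf seq_prefix_def)
qed

lemma round:
  assumes inv: "Inv j \<pi> buf" and w1: "mm j + c \<le> mm j'" and w2: "mm j' < mm j + c + fst_size T"
    and w3: "mm j' \<le> m"
  shows "\<exists>\<sigma> buf'. Er (st j \<pi> buf) (adv (mm j' - mm j - c) (delta_hat T (xs j')) @ \<sigma>) = st j' (\<pi> @ \<sigma>) buf'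
     \<and> Eo (st j \<pi> buf) (adv (mm j' - mm j - c) (delta_hat T (xs j')) @ \<sigma>) = seg j j'
     \<and> Inv j' (\<pi> @ \<sigma>) buf' \<and> prefix (\<pi> @ \<sigma>) p"
proof -
  have jj: "j \<le> j'"
  proof (rule ccontr)
    assume "\<not> j \<le> j'"
    then have "mm j' \<le> mm j" using mm_mono by simp
    then show False using w1 cpos by simp
  qed
  define off where "off = mm j' - mm j - c"
  define q where "q = delta_hat T (xs j)"
  define q' where "q' = delta_hat T (xs j')"
  define l where "l = c + off"
  have l: "l = mm j' - mm j" using w1 by (simp add: l_def off_def)
  have offl: "off < fst_size T" using w2 w1 by (simp add: off_def)
  have a1: "Er (st j \<pi> buf) (adv off q') = (Br \<pi>, q, PG l q' buf) \<and> Eo (st j \<pi> buf) (adv off q') = []"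
    using E_adv[OF offl dh_lt[of "xs j'"], of B c "Br \<pi>" q buf] by (simp add: st_def q_def q'_def l_def)
  obtain \<rho> where p: "p = \<pi> @ \<rho>" using inv by (auto simp: Inv_def prefix_def)
  define s where "s = Br \<pi>"
  have sl: "s < nstates B" using B delta_lt start_lt by (simp add: s_def)
  let ?Z = "\<lambda>i. buf @ outf (delta B) (nu B) s (take i \<rho>)"
  have Bopi: "Bo \<pi> = fst_out T (xs j) @ buf" using inv by (simp add: Inv_def)
  have Bop: "Bo p = fst_out T (xs j) @ buf @ outf (delta B) (nu B) s \<rho>"
    using Bopi p by (simp add: outf_append s_def)
  have "length (Bo p) = m" using Bp by (simp add: fst_out_outf seq_prefix_def)
  then have ex: "l \<le> length (?Z (length \<rho>))" using Bop l w3 by simp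
  define i0 where "i0 = (LEAST i. l \<le> length (?Z i))"
  have i0: "l \<le> length (?Z i0)" unfolding i0_def by (rule LeastI[of _ "length \<rho>"]) (use ex in blast)
  have i0le: "i0 \<le> length \<rho>" unfolding i0_def by (rule Least_le) (use ex in blast)
  have bufc: "length buf < c" using inv by (simp add: Inv_def)
  have i0pos: "i0 \<noteq> 0" using i0 bufc by (cases "i0 = 0") (auto simp: l_def)
  define \<sigma> where "\<sigma> = take i0 \<rho>"
  have sne: "\<sigma> \<noteq> []" using i0pos i0le by (auto simp: \<sigma>_def)
  have bl: "length buf < l" using bufc by (simp add: l_def)
  have minz: "\<forall>i<length \<sigma>. length (buf @ outf (delta B) (nu B) s (take i \<sigma>)) < l"
  proof (intro allI impI)
    fix i assume "i < length \<sigma>"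
    then have "i < i0" by (simp add: \<sigma>_def)
    then have "\<not> l \<le> length (?Z i)" unfolding i0_def by (rule not_less_Least)
    moreover have "take i \<sigma> = take i \<rho>" using \<open>i < i0\<close> by (simp add: \<sigma>_def)
    ultimately show "length (buf @ outf (delta B) (nu B) s (take i \<sigma>)) < l" by simp
  qed
  define z where "z = buf @ outf (delta B) (nu B) s \<sigma>"
  have lz: "l \<le> length z" using i0 by (simp add: z_def \<sigma>_def)
  have pg: "Er (s, q, PG l q' buf) \<sigma> = (foldl (delta B) s \<sigma>, q', AF (drop l z))
    \<and> Eo (s, q, PG l q' buf) \<sigma> = decs T (Md T c) q (take l z) q'
    \<and> length (drop l z) < fst_size B"
    using E_PG[OF sne bl _ minz B sl, of T c q q'] lz by (simp add: z_def)
  have pre: "prefix (\<pi> @ \<sigma>) p" using p by (simp add: \<sigma>_def prefix_def) (metis append_take_drop_id)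
  have Bps: "Bo (\<pi> @ \<sigma>) = fst_out T (xs j) @ z"
    using Bopi by (simp add: outf_append s_def z_def)
  have "prefix (Bo (\<pi> @ \<sigma>)) (Bo p)" using pre by (metis outf_prefix prefix_def)
  then have "prefix (Bo (\<pi> @ \<sigma>)) (seq_prefix S' m)" using Bp by (simp add: fst_out_outf)
  then have Bseq: "Bo (\<pi> @ \<sigma>) = seq_prefix S' (length (Bo (\<pi> @ \<sigma>)))" by (rule pre_seq)
  have "take (mm j') (Bo (\<pi> @ \<sigma>)) = seq_prefix S' (mm j')"
  proof -
    have "mm j' \<le> length (Bo (\<pi> @ \<sigma>))" using lz Bps l by simp
    then show ?thesis using Bseq take_seq_prefix by metis
  qed
  also have "\<dots> = fst_out T (xs j')" by (rule Tpre[symmetric])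
  also have "\<dots> = fst_out T (xs j) @ To q (seg j j')" using Tsplit[OF jj] by (simp add: q_def)
  finally have "fst_out T (xs j) @ take l z = fst_out T (xs j) @ To q (seg j j')"
    using Bps l by (simp add: mm_mono[OF jj])
  then have tz: "take l z = To q (seg j j')" by simp
  have segfold: "foldl (delta T) q (seg j j') = q'"
    using xs_split[OF jj] by (simp add: q_def q'_def delta_hat_append)
  have segmd: "length (seg j j') \<le> Md T c"
  proof -
    have "j' - j < nstates T * (mm j' - mm j + 1)" by (rule seg_bound[OF jj])
    also have "\<dots> \<le> nstates T * (c + fst_size T + 1)"
      using w2 by (intro mult_le_mono2) linarith
    finally show ?thesis by (simp add: Md_def)
  qed
  have dec: "decs T (Md T c) q (take l z) q' = seg j j'"
  proof -
    let ?P = "\<lambda>u. length u \<le> Md T c \<and> To q u = take l z \<and> foldl (delta T) q u = q'"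
    have ex: "\<exists>u. ?P u" using segmd tz segfold by (intro exI[of _ "seg j j'"]) simp
    then have "?P (SOME u. ?P u)" by (rule someI_ex)
    then have "(SOME u. ?P u) = seg j j'"
      using IL_state[OF IL, of "xs j" "SOME u. ?P u" "seg j j'"] tz segfold by (simp add: q_def)
    then show ?thesis using ex by (simp add: decs_def)
  qed
  have invn: "Inv j' (\<pi> @ \<sigma>) (drop l z)"
  proof -
    have "Bo (\<pi> @ \<sigma>) = fst_out T (xs j) @ take l z @ drop l z" using Bps by simp
    also have "\<dots> = fst_out T (xs j') @ drop l z" using tz Tsplit[OF jj] by (simp add: q_def)
    finally show ?thesis using pre pg cB w3 by (simp add: Inv_def)
  qed
  have "Er (st j \<pi> buf) (adv off q' @ \<sigma>) = st j' (\<pi> @ \<sigma>) (drop l z)"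
    using a1 pg by (simp add: st_def s_def q'_def)
  moreover have "Eo (st j \<pi> buf) (adv off q' @ \<sigma>) = seg j j'"
    using a1 pg dec by (simp add: outf_append s_def)
  ultimately show ?thesis using invn pre unfolding off_def q'_def by blast
qed

definition aa where "aa = fst_size T + nstates T + 3"
definition TL where "TL = nstates T * (c + fst_size T) + 1"

lemma rounds:
  "Inv j \<pi> buf \<Longrightarrow> \<exists>\<rho> n. Eo (st j \<pi> buf) \<rho> = seg j n \<and> j \<le> n \<and> m \<le> mm n \<and> n \<le> nstates T * (m + 1)
     \<and> length \<rho> \<le> (length p - length \<pi>) + aa * ((m - mm j) div c + 1) + TL"
proof (induction "m - mm j" arbitrary: j \<pi> buf rule: less_induct)
  case less
  note inv = less.prems
  have mj: "mm j \<le> m" using inv by (simp add: Inv_def)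
  have exj: "\<exists>j'. mm j + c \<le> mm j'" using Tunb by blast
  define j' where "j' = (LEAST j'. mm j + c \<le> mm j')"
  have w1: "mm j + c \<le> mm j'" unfolding j'_def using LeastI_ex[OF exj] .
  have jj: "j < j'"
  proof (rule ccontr)
    assume "\<not> j < j'"
    then have "mm j' \<le> mm j" using mm_mono by simp
    then show False using w1 cpos by simp
  qed
  have "\<not> mm j + c \<le> mm (j' - 1)" unfolding j'_def
    by (rule not_less_Least) (use jj j'_def in simp)
  moreover have "mm j' \<le> mm (j' - 1) + fst_size T" using mm_step[of "j' - 1"] jj by simp
  ultimately have w2: "mm j' < mm j + c + fst_size T" by simp
  have segb: "j' - j < nstates T * (c + fst_size T)"
  proof -
    have "j' - j < nstates T * (mm j' - mm j + 1)" using seg_bound jj by simp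
    also have "\<dots> \<le> nstates T * (c + fst_size T)" using w2 w1 by (intro mult_le_mono2) linarith
    finally show ?thesis .
  qed
  show ?case
  proof (cases "mm j' \<le> m")
    case True
    obtain \<sigma> buf' where r: "Er (st j \<pi> buf) (adv (mm j' - mm j - c) (delta_hat T (xs j')) @ \<sigma>) = st j' (\<pi> @ \<sigma>) buf'"
      "Eo (st j \<pi> buf) (adv (mm j' - mm j - c) (delta_hat T (xs j')) @ \<sigma>) = seg j j'"
      "Inv j' (\<pi> @ \<sigma>) buf'" "prefix (\<pi> @ \<sigma>) p"
      using round[OF inv w1 w2 True] by blast
    have "m - mm j' < m - mm j" using True w1 cpos by linarith
    then obtain \<rho>' n where IH: "Eo (st j' (\<pi> @ \<sigma>) buf') \<rho>' = seg j' n" "j' \<le> n" "m \<le> mm n"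
      "n \<le> nstates T * (m + 1)"
      "length \<rho>' \<le> (length p - length (\<pi> @ \<sigma>)) + aa * ((m - mm j') div c + 1) + TL"
      using less.hyps[OF _ r(3)] by blast
    define A where "A = adv (mm j' - mm j - c) (delta_hat T (xs j'))"
    have segjn: "seg j n = seg j j' @ seg j' n"
    proof -
      have "[j..<n] = [j..<j'] @ [j'..<n]" using upt_add_eq_append[of j j' "n - j'"] jj IH(2) by simp
      then show ?thesis by (simp add: seg_def)
    qed
    have out: "Eo (st j \<pi> buf) (A @ \<sigma> @ \<rho>') = seg j n"
      using r(1,2) IH(1) segjn by (simp add: A_def outf_append flip: append_assoc)
    have lA: "length A \<le> aa"
    proof -
      have "delta_hat T (xs j') < nstates T" by (rule dh_lt)
      moreover have "mm j' - mm j - c < fst_size T" using w1 w2 by linarith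
      ultimately show ?thesis by (simp add: A_def length_adv aa_def)
    qed
    have lp: "length \<pi> + length \<sigma> \<le> length p" using r(4) prefix_length_le by fastforce
    have dv: "(m - mm j') div c + 1 \<le> (m - mm j) div c"
    proof -
      have "(m - mm j') + c \<le> m - mm j" using w1 True by linarith
      then have "((m - mm j') + c) div c \<le> (m - mm j) div c" by (rule div_le_mono)
      then show ?thesis using cpos by simp
    qed
    have "length (A @ \<sigma> @ \<rho>') \<le> aa + length \<sigma> + ((length p - length (\<pi> @ \<sigma>)) + aa * ((m - mm j') div c + 1) + TL)"
      using lA IH(5) by simp
    also have "\<dots> \<le> (length p - length \<pi>) + aa * ((m - mm j) div c + 1) + TL"
    proof -
      have "aa * ((m - mm j') div c + 1) \<le> aa * ((m - mm j) div c)" using dv by (rule mult_le_mono2)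
      then show ?thesis using lp by (simp add: algebra_simps)
    qed
    finally show ?thesis using out IH(2,3,4) jj by (intro exI[of _ "A @ \<sigma> @ \<rho>'"] exI[of _ n]) simp
  next
    case False
    have exn: "\<exists>n. j \<le> n \<and> m \<le> mm n" using False jj by (intro exI[of _ j']) simp
    define n where "n = (LEAST n. j \<le> n \<and> m \<le> mm n)"
    have n: "j \<le> n \<and> m \<le> mm n" unfolding n_def using LeastI_ex[OF exn] .
    have nj': "n \<le> j'" unfolding n_def using False jj by (intro Least_le) simp
    have nb: "n \<le> nstates T * (m + 1)"
    proof (cases "n = j")
      case True
      have "j < nstates T * (mm j + 1)" by (rule xs_bound)
      also have "\<dots> \<le> nstates T * (m + 1)" using mj by simp
      finally show ?thesis using True by simp
    next
      case False
      have "\<not> (j \<le> n - 1 \<and> m \<le> mm (n - 1))" unfolding n_def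
        by (rule not_less_Least) (use n False n_def in simp)
      moreover have "j \<le> n - 1" using n False by linarith
      ultimately have "mm (n - 1) < m" by simp
      moreover have "n - 1 < nstates T * (mm (n - 1) + 1)" by (rule xs_bound)
      ultimately have "n - 1 < nstates T * m"
        by (metis Suc_eq_plus1 Suc_leI less_le_trans mult_le_mono2)
      then show ?thesis by (simp add: algebra_simps)
    qed
    have st: "Er (st j \<pi> buf) [False] = (Br \<pi>, delta_hat T (xs j), LI)"
      "Eo (st j \<pi> buf) [False] = []" by (simp_all add: st_def)
    have out: "Eo (st j \<pi> buf) ([False] @ seg j n) = seg j n"
      using st E_LI by (simp add: outf_append)
    have "length ([False] @ seg j n) \<le> TL" using segb nj' n by (simp add: TL_def)
    then show ?thesis using out n nb by (intro exI[of _ "[False] @ seg j n"] exI[of _ n]) simp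
  qed
qed

lemma decode:
  "\<exists>\<rho> n. Eo (start B, start T, AF []) \<rho> = seq_prefix S n \<and> m \<le> mm n \<and> n \<le> nstates T * (m + 1)
     \<and> length \<rho> \<le> length p + aa * (m div c + 1) + TL"
proof -
  have x0: "xs 0 = []" by (simp add: seq_prefix_def)
  have "Inv 0 [] []" using cpos by (simp add: Inv_def x0 fst_out_def)
  then obtain \<rho> n where r: "Eo (st 0 [] []) \<rho> = seg 0 n" "m \<le> mm n" "n \<le> nstates T * (m + 1)"
     "length \<rho> \<le> (length p - 0) + aa * ((m - mm 0) div c + 1) + TL"
    using rounds by fastforce
  have "st 0 [] [] = (start B, start T, AF [])" by (simp add: st_def x0 delta_hat_def)
  moreover have "seg 0 n = seq_prefix S n" by (simp add: seg_def seq_prefix_def)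
  moreover have "mm 0 = 0" by (simp add: x0 fst_out_def)
  ultimately show ?thesis using r by auto
qed

end

definition BL :: "nat \<Rightarrow> bool list set" where "BL N = {b. length b \<le> N}"

lemma finite_BL: "finite (BL N)"
  using finite_lists_length_le[of "UNIV :: bool set" N] by (simp add: BL_def)

definition MS :: "fst \<Rightarrow> nat \<Rightarrow> emode set" where
  "MS T c = AF ` BL (c + fst_size T)
    \<union> (\<lambda>(k, b). AO k b) ` ({..<fst_size T} \<times> BL (c + fst_size T))
    \<union> (\<lambda>(o', k, b). AQ o' k b) ` ({..<fst_size T} \<times> {..<nstates T} \<times> BL (c + fst_size T))
    \<union> (\<lambda>(l, q, b). PG l q b) ` ({c..<c + fst_size T} \<times> {..<nstates T} \<times> BL (c + fst_size T))
    \<union> {LI}"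

lemma finite_MS: "finite (MS T c)"
  by (simp add: MS_def finite_BL)

definition kE :: "fst \<Rightarrow> nat \<Rightarrow> nat \<Rightarrow> nat" where
  "kE T c K = hsz (K * nstates T * card (MS T c)) (Md T c + 1)"

lemma Emachine:
  assumes B: "wf_fst B" and T: "wf_fst T" and cB: "fst_size B \<le> c" and BK: "fst_size B \<le> K"
  shows "\<exists>E. wf_fst E \<and> fst_size E \<le> kE T c K \<and> (\<forall>x. fst_out E x = outf (Edl B T c) (Env B T c) (start B, start T, AF []) x)"
proof -
  define F where "F = {..<nstates B} \<times> {..<nstates T} \<times> MS T c"
  have finF: "finite F" by (simp add: F_def finite_MS)
  have LT1: "1 \<le> fst_size T" using nstates_le_size[of T] by simp
  have NT1: "1 \<le> nstates T" using T by (simp add: wf_fst_def)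
  have s0F: "(start B, start T, AF []) \<in> F"
    using B T by (auto simp: F_def MS_def BL_def wf_fst_def)
  have clF: "\<forall>s\<in>F. \<forall>b. Edl B T c s b \<in> F"
  proof (intro ballI allI)
    fix st b assume "st \<in> F"
    then obtain s q md where st: "st = (s, q, md)" "s < nstates B" "q < nstates T" "md \<in> MS T c"
      by (auto simp: F_def)
    have sb: "delta B s b < nstates B" using B st(2) by (simp add: wf_fst_def)
    have nub: "length (nu B s b) \<le> c" using nu_le_size[OF B st(2), of b] cB by simp
    show "Edl B T c st b \<in> F"
      using st(4)
    proof (cases md)
      case (PG l q' buf)
      then have l: "c \<le> l" "l < c + fst_size T" "q' < nstates T" "length buf \<le> c + fst_size T"
        using st(4) by (auto simp: MS_def BL_def)
      show ?thesis
      proof (cases "l \<le> length (buf @ nu B s b)")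
        case True
        then have "length (drop l (buf @ nu B s b)) \<le> c + fst_size T" using l nub by simp
        then show ?thesis using True l sb st PG
          by (auto simp: Edl_def F_def MS_def BL_def)
      next
        case False
        then have "length (buf @ nu B s b) \<le> c + fst_size T" using l by simp
        then show ?thesis using False l sb st PG
          by (auto simp: Edl_def F_def MS_def BL_def image_iff)
      qed
    qed (use st LT1 NT1 in \<open>auto simp: F_def MS_def BL_def image_iff\<close>)
  qed
  have nvL: "\<forall>s\<in>F. \<forall>b. length (Env B T c s b) \<le> Md T c + 1"
  proof (intro ballI allI)
    fix st b assume "st \<in> F"
    then obtain s q md where st: "st = (s, q, md)" by (auto simp: F_def)
    have dec: "length (decs T (Md T c) q z q') \<le> Md T c" for q z q'
    proof (cases "\<exists>u. length u \<le> Md T c \<and> outf (delta T) (nu T) q u = z \<and> foldl (delta T) q u = q'")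
      case True
      then show ?thesis unfolding decs_def using someI_ex[OF True] by simp
    next
      case False
      have "decs T (Md T c) q z q' = []" unfolding decs_def using False by (rule if_not_P)
      then show ?thesis by simp
    qed
    show "length (Env B T c st b) \<le> Md T c + 1"
      using dec by (cases md) (auto simp: st Env_def simp del: take_append intro: le_SucI)
  qed
  obtain E where E: "wf_fst E" "fst_size E \<le> hsz (card F) (Md T c + 1)"
    "\<forall>x. fst_out E x = outf (Edl B T c) (Env B T c) (start B, start T, AF []) x"
    using prune[OF finF s0F clF nvL] by blast
  have "card F = nstates B * nstates T * card (MS T c)" by (simp add: F_def card_cartesian_product)
  also have "\<dots> \<le> K * nstates T * card (MS T c)" using nstates_le_size[of B] BK by simp
  finally have "hsz (card F) (Md T c + 1) \<le> kE T c K" unfolding kE_def by (intro hsz_mono) auto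
  then show ?thesis using E by (intro exI[of _ E]) simp
qed

theorem theorem2:
  fixes S :: "nat \<Rightarrow> bool" and f :: "(nat \<Rightarrow> bool) \<Rightarrow> (nat \<Rightarrow> bool)"
  assumes "ILFS_computable f"
    and "fs_deep (f S)"
  shows "fs_deep S"
proof -
  obtain T where T: "wf_fst T" "info_lossless T" and H: "\<forall>S. filterlim (\<lambda>n. length (fst_out T (seq_prefix S n))) at_top sequentially
        \<and> (\<forall>n. fst_out T (seq_prefix S n) = seq_prefix (f S) (length (fst_out T (seq_prefix S n))))"
    using assms(1) unfolding ILFS_computable_def by blast
  define S' where "S' = f S"
  have Tpre: "\<And>n. fst_out T (seq_prefix S n) = seq_prefix S' (length (fst_out T (seq_prefix S n)))"
    using H by (simp add: S'_def)
  have Tunb: "\<And>M. \<exists>n. M \<le> length (fst_out T (seq_prefix S n))"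
  proof -
    fix M
    have "filterlim (\<lambda>n. length (fst_out T (seq_prefix S n))) at_top sequentially" using H by blast
    then have "eventually (\<lambda>n. M \<le> length (fst_out T (seq_prefix S n))) sequentially"
      by (simp add: filterlim_at_top)
    then show "\<exists>n. M \<le> length (fst_out T (seq_prefix S n))" by (auto simp: eventually_sequentially)
  qed
  obtain \<alpha> :: real where \<alpha>: "\<alpha> > 0" and D: "\<forall>k. \<exists>k'. \<exists>\<^sub>\<infinity>m.
     ereal_of_enat (FS k' (seq_prefix S' m)) + ereal (\<alpha> * real m) \<le> ereal_of_enat (FS k (seq_prefix S' m))"
    using assms(2) unfolding fs_deep_def S'_def by blast
  define NT where "NT = nstates T"
  define LT where "LT = fst_size T"
  have NT1: "1 \<le> NT" using T by (simp add: wf_fst_def NT_def)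
  have LT1: "1 \<le> LT" using nstates_le_size[of T] by (simp add: LT_def)
  define \<beta> where "\<beta> = \<alpha> / (4 * real NT)"
  have \<beta>pos: "\<beta> > 0" using \<alpha> NT1 by (simp add: \<beta>_def)
  have mmLT: "\<And>n. length (fst_out T (seq_prefix S n)) \<le> n * LT"
  proof -
    fix n
    show "length (fst_out T (seq_prefix S n)) \<le> n * LT"
      using fst_outf_len_le[OF T(1) start_lt[OF T(1)], of "seq_prefix S n"]
      by (simp add: fst_out_outf LT_def seq_prefix_def)
  qed
  show ?thesis unfolding fs_deep_def
  proof (intro exI[of _ \<beta>] conjI allI)
    show "\<beta> > 0" by (rule \<beta>pos)
    fix k
    define K where "K = gL T k"
    obtain K' where DK: "\<exists>\<^sub>\<infinity>m. ereal_of_enat (FS K' (seq_prefix S' m)) + ereal (\<alpha> * real m) \<le> ereal_of_enat (FS K (seq_prefix S' m))"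
      using D by blast
    define a0 where "a0 = LT + NT + 3"
    define c where "c = K' + 1 + nat \<lceil>4 * real a0 / \<alpha>\<rceil>"
    define TL0 where "TL0 = NT * (c + LT) + 1"
    define kk where "kk = kE T c K'"
    have c4: "4 * real a0 \<le> \<alpha> * real c"
    proof -
      have "4 * real a0 / \<alpha> \<le> real c" unfolding c_def by linarith
      then show ?thesis using \<alpha> by (simp add: divide_le_eq mult.commute)
    qed
    show "\<exists>k'. \<exists>\<^sub>\<infinity>n. ereal_of_enat (FS k' (seq_prefix S n)) + ereal (\<beta> * real n) \<le> ereal_of_enat (FS k (seq_prefix S n))"
    proof (intro exI[of _ kk])
      show "\<exists>\<^sub>\<infinity>n. ereal_of_enat (FS kk (seq_prefix S n)) + ereal (\<beta> * real n) \<le> ereal_of_enat (FS k (seq_prefix S n))"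
        unfolding INFM_nat_le
      proof
        fix N0
        define M0 where "M0 = max (LT * N0 + 1) (nat \<lceil>2 * (real a0 + real TL0 + \<alpha>) / \<alpha>\<rceil>)"
        obtain m where m: "M0 \<le> m" and Pm: "ereal_of_enat (FS K' (seq_prefix S' m)) + ereal (\<alpha> * real m) \<le> ereal_of_enat (FS K (seq_prefix S' m))"
          using DK unfolding INFM_nat_le by blast
        have lowerN: "FS K (seq_prefix S' m) \<le> FS k (seq_prefix S n)" if "m \<le> length (fst_out T (seq_prefix S n))" for n
        proof -
          let ?L = "length (fst_out T (seq_prefix S n))"
          have "fst_out T (seq_prefix S n) = take m (seq_prefix S' ?L) @ drop m (seq_prefix S' ?L)"
            using Tpre[of n] by simp
          also have "take m (seq_prefix S' ?L) = seq_prefix S' m" using that by (rule take_seq_prefix)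
          finally show ?thesis using lower_bound[OF T(1)] unfolding K_def by blast
        qed
        have nbig: "N0 \<le> n" if "m \<le> length (fst_out T (seq_prefix S n))" for n
        proof (rule ccontr)
          assume "\<not> N0 \<le> n"
          then have "n * LT \<le> N0 * LT" by simp
          then have "length (fst_out T (seq_prefix S n)) \<le> LT * N0" using mmLT[of n] by (simp only: mult.commute)
          then show False using that m by (simp add: M0_def)
        qed
        show "\<exists>n\<ge>N0. ereal_of_enat (FS kk (seq_prefix S n)) + ereal (\<beta> * real n) \<le> ereal_of_enat (FS k (seq_prefix S n))"
        proof (cases "FS K' (seq_prefix S' m) = \<infinity>")
          case True
          then have "ereal_of_enat (FS K (seq_prefix S' m)) = \<infinity>" using Pm by simp
          then have inf: "FS K (seq_prefix S' m) = \<infinity>" by (cases "FS K (seq_prefix S' m)") auto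
          obtain n where n: "m \<le> length (fst_out T (seq_prefix S n))" using Tunb by blast
          have "FS k (seq_prefix S n) = \<infinity>" using lowerN[OF n] inf by (simp add: top_enat_def[symmetric] top_unique)
          then show ?thesis using nbig[OF n] by (intro exI[of _ n]) simp
        next
          case False
          obtain B p where BB: "wf_fst B" "fst_size B \<le> K'" "fst_out B p = seq_prefix S' m"
            "FS K' (seq_prefix S' m) = enat (length p)"
            using FS_attain[OF False] by blast
          have cB: "fst_size B \<le> c" using BB(2) by (simp add: c_def)
          interpret DS T B S S' c m p
            using T BB cB Tpre Tunb by unfold_locales auto
          obtain \<rho> n where dec: "outf (Edl B T c) (Env B T c) (start B, start T, AF []) \<rho> = seq_prefix S n"
            "m \<le> length (fst_out T (seq_prefix S n))" "n \<le> nstates T * (m + 1)"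
            "length \<rho> \<le> length p + aa * (m div c + 1) + DS.TL T c"
            using decode by blast
          obtain E where E: "wf_fst E" "fst_size E \<le> kE T c K'"
            "\<forall>x. fst_out E x = outf (Edl B T c) (Env B T c) (start B, start T, AF []) x"
            using Emachine[OF BB(1) T(1) cB BB(2)] by blast
          have FSkk: "FS kk (seq_prefix S n) \<le> enat (length \<rho>)"
            using E dec(1) by (intro FS_le[of E]) (auto simp: kk_def)
          have low: "FS K (seq_prefix S' m) \<le> FS k (seq_prefix S n)" by (rule lowerN[OF dec(2)])
          have r0: "real (length \<rho>) \<le> real (length p) + real a0 * real (m div c) + real a0 + real TL0"
          proof -
            have "length \<rho> \<le> length p + a0 * (m div c) + a0 + TL0"
              using dec(4) by (simp add: aa_def TL_def a0_def TL0_def LT_def NT_def algebra_simps)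
            then show ?thesis by (metis of_nat_add of_nat_le_iff of_nat_mult)
          qed
          have r1: "real a0 * real (m div c) \<le> \<alpha> * real m / 4"
          proof -
            have cpos: "0 < c" by (simp add: c_def)
            have "real (m div c) * real c \<le> real m"
              by (metis div_times_less_eq_dividend of_nat_le_iff of_nat_mult)
            then have "4 * real a0 * real (m div c) \<le> \<alpha> * real c * real (m div c)"
              using c4 by (intro mult_right_mono) auto
            also have "\<dots> \<le> \<alpha> * real m" using \<open>real (m div c) * real c \<le> real m\<close> \<alpha>
              by (simp add: mult.assoc mult.commute[of "real c"])
            finally show ?thesis by simp
          qed
          have r2: "\<beta> * real n \<le> \<alpha> * real m / 4 + \<alpha> / 4"
          proof -
            have "real n \<le> real NT * (real m + 1)" using dec(3) unfolding NT_def
              by (metis of_nat_1 of_nat_add of_nat_le_iff of_nat_mult)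
            then have "\<beta> * real n \<le> \<beta> * (real NT * (real m + 1))" using \<beta>pos by (intro mult_left_mono) auto
            also have "\<dots> = \<alpha> * real m / 4 + \<alpha> / 4" using NT1 by (simp add: \<beta>_def field_simps)
            finally show ?thesis .
          qed
          have r3: "real a0 + real TL0 + \<alpha> \<le> \<alpha> * real m / 2"
          proof -
            have "2 * (real a0 + real TL0 + \<alpha>) / \<alpha> \<le> real m" using m unfolding M0_def by linarith
            then show ?thesis using \<alpha> by (simp add: divide_le_eq mult.commute)
          qed
          have e3: "real (length \<rho>) + \<beta> * real n \<le> real (length p) + \<alpha> * real m"
            using r0 r1 r2 r3 \<alpha> by linarith
          have "ereal_of_enat (FS kk (seq_prefix S n)) + ereal (\<beta> * real n) \<le> ereal (real (length \<rho>)) + ereal (\<beta> * real n)"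
            using FSkk by (intro add_right_mono) (metis ereal_of_enat_le_iff ereal_of_enat_simps(1))
          also have "\<dots> = ereal (real (length \<rho>) + \<beta> * real n)" by simp
          also have "\<dots> \<le> ereal (real (length p) + \<alpha> * real m)" using e3 by simp
          also have "\<dots> = ereal_of_enat (FS K' (seq_prefix S' m)) + ereal (\<alpha> * real m)" using BB(4) by simp
          also have "\<dots> \<le> ereal_of_enat (FS K (seq_prefix S' m))" by (rule Pm)
          also have "\<dots> \<le> ereal_of_enat (FS k (seq_prefix S n))" using low by simp
          finally show ?thesis using nbig[OF dec(2)] by blast
        qed
      qed
    qed
  qed
qed

end
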